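(* Let $(z_n)_{n\ge1}$ be real numbers in $(0,1)$ with $\sum_{n}(1-z_n)<\infty$ and $z_n\to1$, and let $B(z)=\prod_{n=1}^\infty\frac{z_n-z}{1-z_nz}=\sum_{n\ge0}a_nz^n$. With $A_n=a_0+\dots+a_n$ and $M_n=\frac{A_0+\dots+A_{n-1}}n$: if $(M_n)$ converges to some limit $c$, then $c=0$. *)

theory Defs
  imports "HOL-Analysis.Analysis"
begin

end

theory Submission
  imports Defs
begin

lemma blaschke_zero:
  fixes z :: "nat \<Rightarrow> real"
  assumes z_range: "\<And>n. 0 < z n \<and> z n < 1"
    and summ: "summable (\<lambda>n. 1 - z n)"
  shows "(\<Prod>n. (complex_of_real (z n) - complex_of_real (z k)) / (1 - complex_of_real (z n) * complex_of_real (z k))) = 0"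
proof -
  define x where "x = z k"
  have x: "0 < x" "x < 1" using z_range x_def by auto
  define f where "f n = (complex_of_real (z n) - complex_of_real x) / (1 - complex_of_real (z n) * complex_of_real x)" for n
  have fr: "f n - 1 = complex_of_real (- ((1 - z n) * (1 + x) / (1 - z n * x)))" for n
  proof -
    have "z n * x < 1" using z_range[of n] x using mult_strict_mono[of "z n" 1 x 1] by simp
    hence ne: "1 - z n * x \<noteq> 0" by simp
    have ne': "1 - complex_of_real (z n) * complex_of_real x \<noteq> 0"
      using ne by (metis of_real_1 of_real_diff of_real_eq_0_iff of_real_mult)
    show ?thesis unfolding f_def using ne ne'
      by (simp add: field_simps)
  qed
  have bnd: "norm (f n - 1) \<le> (2 / (1 - x)) * (1 - z n)" for n
  proof -
    have zn: "0 < z n" "z n < 1" using z_range[of n] by auto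
    have d: "1 - z n * x \<ge> 1 - x" using zn x by (simp add: mult_left_le_one_le)
    have "norm (f n - 1) = \<bar>(1 - z n) * (1 + x) / (1 - z n * x)\<bar>"
      by (simp only: fr norm_of_real abs_minus_cancel)
    also have "\<dots> = (1 - z n) * (1 + x) / (1 - z n * x)"
      using zn x d by (intro abs_of_nonneg divide_nonneg_nonneg mult_nonneg_nonneg; linarith)
    also have "\<dots> \<le> (1 - z n) * 2 / (1 - x)"
      using zn x d by (intro frac_le mult_left_mono mult_nonneg_nonneg) auto
    finally show ?thesis by (simp add: mult.commute)
  qed
  have "summable (\<lambda>n. norm (f n - 1))"
    by (rule summable_comparison_test[OF _ summable_mult[OF summ, of "2/(1-x)"]])
       (use bnd in \<open>intro exI[of _ 0] allI impI; simp\<close>)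
  hence "convergent_prod f"
    by (intro abs_convergent_prod_imp_convergent_prod summable_imp_abs_convergent_prod)
  hence "f has_prod prodinf f" by blast
  moreover have "f k = 0" unfolding f_def x_def by simp
  ultimately have "prodinf f = 0" by (rule has_prod_zeroI)
  thus ?thesis unfolding f_def x_def .
qed

lemma abel_part:
  fixes a :: "nat \<Rightarrow> complex" and c :: complex and S :: "nat \<Rightarrow> complex" and t :: real
  assumes S_def: "\<And>n. S n = (\<Sum>k<n. \<Sum>j\<le>k. a j)"
    and Kb: "\<And>n. norm (S n) \<le> K * real n"
    and t: "0 < t" "t < 1"
    and sums0: "(\<lambda>n. a n * complex_of_real t ^ n) sums 0"
  shows "c = -((1 - complex_of_real t)^2 * (\<Sum>n. (S (Suc n) - of_nat (Suc n) * c) * complex_of_real t ^ n))"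
    and "summable (\<lambda>n. (S (Suc n) - of_nat (Suc n) * c) * complex_of_real t ^ n)"
proof -
  define r where "r = complex_of_real t"
  define A where "A n = (\<Sum>j\<le>n. a j)" for n
  have S0: "S 0 = 0" by (simp add: S_def)
  have SS: "S (Suc n) = S n + A n" for n by (simp add: S_def A_def)
  have AS: "A (Suc n) = A n + a (Suc n)" for n by (simp add: A_def)
  have A0: "A 0 = a 0" by (simp add: A_def)
  have nr: "norm r = t" using t by (simp add: r_def)
  have nr1: "norm r < 1" using nr t by simp
  have r1: "r \<noteq> 1" using nr1 by auto
  have geo: "(\<lambda>n. of_nat (Suc n) * r ^ n) sums (1 / (1 - r)^2)"
    by (rule geometric_deriv_sums[OF nr1])
  have geoR: "summable (\<lambda>n. real (Suc n) * t ^ n)"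
    using geometric_deriv_sums[of t] t by (auto simp: sums_iff)
  have sumSS: "summable (\<lambda>n. S (Suc n) * r ^ n)"
  proof (rule summable_comparison_test[OF _ summable_mult[OF geoR, of K]])
    show "\<exists>N. \<forall>n\<ge>N. norm (S (Suc n) * r ^ n) \<le> K * (real (Suc n) * t ^ n)"
    proof (intro exI[of _ 0] allI impI)
      fix n
      have "norm (S (Suc n) * r ^ n) = norm (S (Suc n)) * t ^ n" by (simp add: norm_mult norm_power nr)
      also have "\<dots> \<le> (K * real (Suc n)) * t ^ n"
        using Kb[of "Suc n"] t by (intro mult_right_mono) auto
      finally show "norm (S (Suc n) * r ^ n) \<le> K * (real (Suc n) * t ^ n)" by (simp add: mult.assoc)
    qed
  qed
  have sumS: "summable (\<lambda>n. S n * r ^ n)"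
    using sumSS by (subst (asm) summable_powser_split_head)
  have hS: "(\<Sum>n. S (Suc n) * r ^ n) * r = (\<Sum>n. S n * r ^ n)"
    using powser_split_head(2)[OF sumS] S0 by simp
  have eqA: "(\<lambda>n. A n * r ^ n) = (\<lambda>n. S (Suc n) * r ^ n - S n * r ^ n)"
    by (rule ext) (simp add: SS algebra_simps)
  have sumA: "summable (\<lambda>n. A n * r ^ n)"
    unfolding eqA by (intro summable_diff sumSS sumS)
  define G where "G = (\<Sum>n. S (Suc n) * r ^ n)"
  have IA: "(\<Sum>n. A n * r ^ n) = (1 - r) * G"
  proof -
    have "(\<Sum>n. A n * r ^ n) = G - (\<Sum>n. S n * r ^ n)"
      unfolding eqA G_def by (rule suminf_diff[OF sumSS sumS, symmetric])
    also have "\<dots> = (1 - r) * G" unfolding hS[symmetric] G_def by (simp add: algebra_simps)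
    finally show ?thesis .
  qed
  have suma: "summable (\<lambda>n. a n * r ^ n)" using sums0 by (simp add: r_def sums_iff)
  have a0: "(\<Sum>n. a n * r ^ n) = 0" using sums0 by (simp add: r_def sums_iff)
  have sumAS: "summable (\<lambda>n. A (Suc n) * r ^ n)"
    using sumA by (subst summable_powser_split_head)
  have hA: "(\<Sum>n. A (Suc n) * r ^ n) * r = (\<Sum>n. A n * r ^ n) - A 0"
    using powser_split_head(2)[OF sumA] .
  have eqa: "(\<lambda>n. a (Suc n) * r ^ n) = (\<lambda>n. A (Suc n) * r ^ n - A n * r ^ n)"
    by (rule ext) (simp add: AS algebra_simps)
  have "(\<Sum>n. a n * r ^ n) = a 0 + (\<Sum>n. a (Suc n) * r ^ n) * r"
    using powser_split_head(1)[OF suma] .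
  also have "(\<Sum>n. a (Suc n) * r ^ n) = (\<Sum>n. A (Suc n) * r ^ n) - (\<Sum>n. A n * r ^ n)"
    unfolding eqa by (rule suminf_diff[OF sumAS sumA, symmetric])
  finally have "(\<Sum>n. a n * r ^ n) = a 0 + ((\<Sum>n. A n * r ^ n) - A 0) - (\<Sum>n. A n * r ^ n) * r"
    using hA by (simp add: algebra_simps)
  also have "\<dots> = (1 - r) * (\<Sum>n. A n * r ^ n)" using A0 by (simp add: algebra_simps)
  finally have "(1 - r) * ((1 - r) * G) = 0" using a0 IA by simp
  hence G0: "G = 0" using r1 by simp
  have sumg: "summable (\<lambda>n. (S (Suc n) - of_nat (Suc n) * c) * r ^ n)"
  proof -
    have "summable (\<lambda>n. S (Suc n) * r ^ n - c * (of_nat (Suc n) * r ^ n))"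
      using sumSS geo by (intro summable_diff summable_mult) (auto simp: sums_iff)
    thus ?thesis by (simp add: algebra_simps)
  qed
  have "(\<Sum>n. (S (Suc n) - of_nat (Suc n) * c) * r ^ n) = G - c * (1 / (1 - r)^2)"
  proof -
    have "(\<Sum>n. (S (Suc n) - of_nat (Suc n) * c) * r ^ n) = (\<Sum>n. S (Suc n) * r ^ n - c * (of_nat (Suc n) * r ^ n))"
      by (simp add: algebra_simps)
    also have "\<dots> = G - (\<Sum>n. c * (of_nat (Suc n) * r ^ n))"
      unfolding G_def using sumSS geo by (intro suminf_diff[symmetric] summable_mult) (auto simp: sums_iff)
    also have "(\<Sum>n. c * (of_nat (Suc n) * r ^ n)) = c * (1 / (1 - r)^2)"
      using geo by (subst suminf_mult) (auto simp: sums_iff)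
    finally show ?thesis .
  qed
  hence "-((1 - r)^2 * (\<Sum>n. (S (Suc n) - of_nat (Suc n) * c) * r ^ n)) = c"
    using G0 r1 by (simp add: field_simps)
  thus "c = -((1 - complex_of_real t)^2 * (\<Sum>n. (S (Suc n) - of_nat (Suc n) * c) * complex_of_real t ^ n))"
    unfolding r_def by simp
  show "summable (\<lambda>n. (S (Suc n) - of_nat (Suc n) * c) * complex_of_real t ^ n)"
    using sumg unfolding r_def .
qed

theorem mainTheorem10:
  fixes z :: "nat \<Rightarrow> real" and a :: "nat \<Rightarrow> complex" and c :: complex
  assumes z_range: "\<And>n. 0 < z n \<and> z n < 1"
    and summ: "summable (\<lambda>n. 1 - z n)"
    and lim1: "z \<longlonglongrightarrow> 1"
    and coeffs: "\<And>w::complex. norm w < 1 \<Longrightarrow>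
        (\<lambda>n. a n * w ^ n) sums (\<Prod>n. (complex_of_real (z n) - w) / (1 - complex_of_real (z n) * w))"
    and cesaro: "(\<lambda>n. (\<Sum>k<n. \<Sum>j\<le>k. a j) / of_nat n) \<longlonglongrightarrow> c"
  shows "c = 0"
proof -
  define S where "S n = (\<Sum>k<n. \<Sum>j\<le>k. a j)" for n
  have sums0: "(\<lambda>n. a n * complex_of_real (z k) ^ n) sums 0" for k
  proof -
    have "norm (complex_of_real (z k)) < 1" using z_range[of k] by simp
    from coeffs[OF this, unfolded blaschke_zero[OF z_range summ, of k]] show ?thesis .
  qed
  have "Bseq (\<lambda>n. S n / of_nat n)"
    using cesaro unfolding S_def by (intro convergent_imp_Bseq convergentI)
  then obtain K where K: "K > 0" "\<And>n. norm (S n / of_nat n) \<le> K" by (auto elim: BseqE)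
  have Kb: "norm (S n) \<le> K * real n" for n
  proof (cases "n = 0")
    case True thus ?thesis by (simp add: S_def)
  next
    case False
    have "norm (S n) = norm (S n / of_nat n) * real n" using False by (simp add: norm_divide)
    also have "\<dots> \<le> K * real n" using K(2)[of n] by (intro mult_right_mono) auto
    finally show ?thesis .
  qed
  have small: "norm c \<le> 2 * e" if e: "e > 0" for e
  proof -
    from tendstoD[OF cesaro e] obtain N where N: "\<And>n. n \<ge> N \<Longrightarrow> dist (S n / of_nat n) c < e"
      unfolding S_def eventually_sequentially by blast
    define g where "g n = S (Suc n) - of_nat (Suc n) * c" for n
    define C where "C = (\<Sum>n<N. norm (g n))"
    have gb: "norm (g n) \<le> e * real (Suc n)" if "n \<ge> N" for n
    proof -
      have "g n = of_nat (Suc n) * (S (Suc n) / of_nat (Suc n) - c)"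
        unfolding g_def by (simp add: field_simps del: of_nat_Suc)
      hence "norm (g n) = real (Suc n) * dist (S (Suc n) / of_nat (Suc n)) c"
        by (simp add: norm_mult dist_norm del: of_nat_Suc)
      also have "\<dots> \<le> real (Suc n) * e" using N[of "Suc n"] that by (intro mult_left_mono) auto
      finally show ?thesis by (simp add: mult.commute)
    qed
    have "(\<lambda>k. (1 - z k)^2 * C) \<longlonglongrightarrow> (1 - 1)^2 * C" by (intro tendsto_intros lim1)
    hence "eventually (\<lambda>k. (1 - z k)^2 * C < e) sequentially" using e by (intro order_tendstoD) auto
    then obtain k where k: "(1 - z k)^2 * C < e" unfolding eventually_sequentially by blast
    define t where "t = z k"
    have t: "0 < t" "t < 1" using z_range[of k] t_def by auto
    note ab = abel_part[OF S_def Kb t sums0[of k, folded t_def]]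
    define r where "r = complex_of_real t"
    have geoR: "(\<lambda>n. real (Suc n) * t ^ n) sums (1 / (1 - t)^2)"
      using geometric_deriv_sums[of t] t by auto
    define D where "D n = (if n \<in> {..<N} then norm (g n) else 0)" for n
    have Ds: "D sums C" unfolding D_def C_def by (rule sums_If_finite_set) simp
    have hs: "(\<lambda>n. D n + e * (real (Suc n) * t ^ n)) sums (C + e * (1 / (1 - t)^2))"
      by (intro sums_add Ds sums_mult geoR)
    have pt: "norm (g n * r ^ n) \<le> D n + e * (real (Suc n) * t ^ n)" for n
    proof -
      have tn: "t ^ n \<le> 1" "0 \<le> t ^ n" using t by (auto intro: power_le_one)
      have eq: "norm (g n * r ^ n) = norm (g n) * t ^ n" using t by (simp add: r_def norm_mult norm_power)
      show ?thesis
      proof (cases "n < N")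
        case True
        have "norm (g n) * t ^ n \<le> norm (g n)" using tn by (simp add: mult_left_le)
        moreover have "0 \<le> e * (real (Suc n) * t ^ n)" using e tn by simp
        ultimately show ?thesis using True eq by (simp add: D_def)
      next
        case False
        have "norm (g n) * t ^ n \<le> e * real (Suc n) * t ^ n"
          using gb[of n] False tn by (intro mult_right_mono) auto
        thus ?thesis using False eq by (simp add: D_def mult.assoc)
      qed
    qed
    have sg: "summable (\<lambda>n. norm (g n * r ^ n))"
      by (rule summable_comparison_test[OF _ sums_summable[OF hs]])
         (use pt in \<open>intro exI[of _ 0] allI impI; simp\<close>)
    have "norm (\<Sum>n. g n * r ^ n) \<le> (\<Sum>n. norm (g n * r ^ n))" by (rule summable_norm[OF sg])
    also have "\<dots> \<le> C + e * (1 / (1 - t)^2)"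
      using suminf_le[OF pt sg sums_summable[OF hs]] hs by (simp add: sums_iff)
    finally have nb: "norm (\<Sum>n. g n * r ^ n) \<le> C + e * (1 / (1 - t)^2)" .
    have "c = -((1 - r)^2 * (\<Sum>n. g n * r ^ n))" using ab(1) unfolding g_def r_def .
    moreover have "1 - r = complex_of_real (1 - t)" by (simp add: r_def)
    hence "norm ((1 - r)^2) = (1 - t)^2" using t by (simp only: norm_power norm_of_real)
    ultimately have "norm c = (1 - t)^2 * norm (\<Sum>n. g n * r ^ n)"
      by (simp only: norm_minus_cancel norm_mult)
    also have "\<dots> \<le> (1 - t)^2 * (C + e * (1 / (1 - t)^2))"
      using nb by (intro mult_left_mono) auto
    also have "\<dots> = (1 - t)^2 * C + e" using t by (simp add: field_simps)
    also have "\<dots> \<le> 2 * e" using k t_def by simp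
    finally show ?thesis .
  qed
  show "c = 0"
  proof (rule ccontr)
    assume "c \<noteq> 0"
    hence "norm c > 0" by simp
    from small[of "norm c / 4"] this show False by simp
  qed
qed

end
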